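(* Let $f:\mathbb{R}^d\to\mathbb{R}$ be twice continuously differentiable with $mI_d\preceq\nabla^2f\preceq LI_d$, let $u=1/L$, and let $R\ge1$, $\delta>0$ with $h=R\delta$ and $R^4\delta^4\le\frac14$. Consider iteration $n$ of Algorithm 2 (context) started at given $(x_n,v_n)$, and let $(x_n^*(t),v_n^*(t))_{t\in[0,h]}$ be the underdamped Langevin diffusion started at $(x_n,v_n)$, driven by the same Brownian motion as the iteration. Then for any $i=1,\dots,R$ and $k=1,\dots,K-1$, $$\mathbb{E}\|x_n^{(k,i)}-x_n^*(\alpha_ih)\|^2\le(2R^4\delta^4)^k\frac1R\sum_{j=1}^R\mathbb{E}\|x_n-x_n^*(\alpha_jh)\|^2+4R^3\delta^4\sum_{j=1}^R\mathbb{E}\sup_{s\in[(j-1)\delta,j\delta]}\|x_n^*(\alpha_jh)-x_n^*(s)\|^2.$$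
   Context: Underdamped Langevin diffusion: $dv=-2v\,dt-u\nabla f(x)dt+2\sqrt u\,dB_t$, $dx=v\,dt$. Iteration $n$ of Algorithm 2 with parameters $h,R,K$, $\delta=h/R$: sample independently $\alpha_i\sim U[\frac{i-1}R,\frac iR]$, $i=1,\dots,R$, and a standard $d$-dimensional Brownian motion $(B_s)_{s\in[0,h]}$; set $W_{1,i}=\int_0^{\alpha_ih}(1-e^{-2(\alpha_ih-s)})dB_s$; set $x_n^{(0,i)}=x_n$ and for $k=1,\dots,K-1$, $i=1,\dots,R$: $x_n^{(k,i)}=x_n+\frac12(1-e^{-2\alpha_ih})v_n-\frac12u\sum_{j=1}^i\left[\int_{(j-1)\delta}^{\min(j\delta,\alpha_ih)}(1-e^{-2(\alpha_ih-s)})ds\cdot\nabla f(x_n^{(k-1,j)})\right]+\sqrt uW_{1,i}$. *)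

theory Defs
  imports "HOL-Probability.Probability"
begin

definition std_brownian_motion ::
  "'w measure \<Rightarrow> real \<Rightarrow> (real \<Rightarrow> 'w \<Rightarrow> 'a::euclidean_space) \<Rightarrow> bool" where
  "std_brownian_motion M T B \<longleftrightarrow>
     prob_space M \<and>
     (\<forall>t\<in>{0..T}. B t \<in> borel_measurable M) \<and>
     (\<forall>\<omega>\<in>space M. B 0 \<omega> = 0 \<and> continuous_on {0..T} (\<lambda>t. B t \<omega>)) \<and>
     (\<forall>s t. 0 \<le> s \<and> s < t \<and> t \<le> T \<longrightarrow>
        (\<forall>b\<in>Basis. distributed M lborel (\<lambda>\<omega>. (B t \<omega> - B s \<omega>) \<bullet> b)
                       (normal_density 0 (sqrt (t - s))))) \<and>
     (\<forall>(ts :: nat \<Rightarrow> real) n. 0 \<le> ts 0 \<and> (\<forall>k<n. ts k \<le> ts (Suc k)) \<and> ts n \<le> T \<longrightarrow>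
        prob_space.indep_vars M (\<lambda>_. borel)
          (\<lambda>(k, b) \<omega>. (B (ts (Suc k)) \<omega> - B (ts k) \<omega>) \<bullet> b) ({..<n} \<times> Basis))"

text \<open>Wiener integral of a deterministic C^1 integrand g (with derivative g') against a
  continuous path b on [0,t], defined pathwise by integration by parts:
  int_0^t g(s) db_s = g(t) b(t) - g(0) b(0) - int_0^t g'(s) b(s) ds.
  (For a Brownian path this coincides almost surely with the Ito integral.)\<close>
definition wiener_integral ::
  "(real \<Rightarrow> real) \<Rightarrow> (real \<Rightarrow> real) \<Rightarrow> (real \<Rightarrow> 'a::euclidean_space) \<Rightarrow> real \<Rightarrow> 'a" where
  "wiener_integral g g' b t = g t *\<^sub>R b t - g 0 *\<^sub>R b 0 - integral {0..t} (\<lambda>s. g' s *\<^sub>R b s)"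

definition W1 :: "(real \<Rightarrow> 'a::euclidean_space) \<Rightarrow> real \<Rightarrow> 'a" where
  "W1 b t = wiener_integral (\<lambda>s. 1 - exp (- 2 * (t - s))) (\<lambda>s. - 2 * exp (- 2 * (t - s))) b t"

text \<open>Inner iterates x_n^{(k,i)} of Algorithm 2 (for one realisation):
  g = gradient of f, a i = alpha_i, W i = W_{1,i}, delta = h / R.\<close>
primrec alg2_iter ::
  "('a::euclidean_space \<Rightarrow> 'a) \<Rightarrow> real \<Rightarrow> real \<Rightarrow> nat \<Rightarrow> 'a \<Rightarrow> 'a \<Rightarrow> (nat \<Rightarrow> real) \<Rightarrow> (nat \<Rightarrow> 'a)
     \<Rightarrow> nat \<Rightarrow> nat \<Rightarrow> 'a" where
  "alg2_iter g u h R x v a W 0 i = x"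
| "alg2_iter g u h R x v a W (Suc k) i =
     x + ((1 - exp (- 2 * (a i * h))) / 2) *\<^sub>R v
     - (u / 2) *\<^sub>R (\<Sum>j=1..i.
          integral {(real j - 1) * (h / real R) .. min (real j * (h / real R)) (a i * h)}
                   (\<lambda>s. 1 - exp (- 2 * (a i * h - s)))
          *\<^sub>R g (alg2_iter g u h R x v a W k j))
     + sqrt u *\<^sub>R W i"

end

theory Submission
  imports Defs
begin



lemma deriv_line_grad:
  fixes grad :: "'a::euclidean_space \<Rightarrow> 'a" and Hf :: "'a \<Rightarrow> ('a \<Rightarrow>\<^sub>L 'a)"
  assumes hess_f: "\<And>x. (grad has_derivative blinfun_apply (Hf x)) (at x)"
  shows "((\<lambda>s. grad (x + s *\<^sub>R d) \<bullet> d) has_real_derivative (blinfun_apply (Hf (x + s *\<^sub>R d)) d \<bullet> d)) (at s)"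
proof -
  have l: "((\<lambda>s. x + s *\<^sub>R d) has_derivative (\<lambda>e. e *\<^sub>R d)) (at s)"
    by (auto intro!: derivative_eq_intros)
  have "((\<lambda>s. grad (x + s *\<^sub>R d)) has_derivative (\<lambda>e. blinfun_apply (Hf (x + s *\<^sub>R d)) (e *\<^sub>R d))) (at s)"
    using has_derivative_compose[OF l hess_f] by simp
  then have "((\<lambda>s. grad (x + s *\<^sub>R d) \<bullet> d) has_derivative (\<lambda>e. blinfun_apply (Hf (x + s *\<^sub>R d)) (e *\<^sub>R d) \<bullet> d)) (at s)"
    by (auto intro!: derivative_eq_intros)
  then show ?thesis
    by (simp add: has_field_derivative_def blinfun.scaleR_right mult.commute[of _ "blinfun_apply (Hf (x + s *\<^sub>R d)) d \<bullet> d"])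
qed

lemma deriv_line_f:
  fixes f :: "'a::euclidean_space \<Rightarrow> real" and grad :: "'a \<Rightarrow> 'a"
  assumes grad_f: "\<And>x. (f has_derivative (\<lambda>w. grad x \<bullet> w)) (at x)"
  shows "((\<lambda>s. f (x + s *\<^sub>R d)) has_real_derivative (grad (x + s *\<^sub>R d) \<bullet> d)) (at s)"
proof -
  have l: "((\<lambda>s. x + s *\<^sub>R d) has_derivative (\<lambda>e. e *\<^sub>R d)) (at s)"
    by (auto intro!: derivative_eq_intros)
  have "((\<lambda>s. f (x + s *\<^sub>R d)) has_derivative (\<lambda>e. grad (x + s *\<^sub>R d) \<bullet> (e *\<^sub>R d))) (at s)"
    using has_derivative_compose[OF l grad_f] by simp
  then show ?thesis
    by (simp add: has_field_derivative_def mult.commute[of _ "grad (x + s *\<^sub>R d) \<bullet> d"])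
qed

lemma grad_mono_bounds:
  fixes grad :: "'a::euclidean_space \<Rightarrow> 'a" and Hf :: "'a \<Rightarrow> ('a \<Rightarrow>\<^sub>L 'a)"
  assumes hess_f: "\<And>x. (grad has_derivative blinfun_apply (Hf x)) (at x)"
    and lo: "\<And>x w. 0 \<le> blinfun_apply (Hf x) w \<bullet> w"
    and up: "\<And>x w. blinfun_apply (Hf x) w \<bullet> w \<le> L * (norm w)\<^sup>2"
    and t: "0 \<le> t"
  shows "0 \<le> (grad (x + t *\<^sub>R d) - grad x) \<bullet> d"
    and "(grad (x + t *\<^sub>R d) - grad x) \<bullet> d \<le> L * t * (norm d)\<^sup>2"
proof -
  have "grad (x + 0 *\<^sub>R d) \<bullet> d \<le> grad (x + t *\<^sub>R d) \<bullet> d"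
    apply (rule DERIV_nonneg_imp_nondecreasing[OF t])
    using deriv_line_grad[OF hess_f] lo by blast
  then show "0 \<le> (grad (x + t *\<^sub>R d) - grad x) \<bullet> d" by (simp add: inner_diff_left)
  have "grad (x + t *\<^sub>R d) \<bullet> d - L * t * (norm d)\<^sup>2 \<le> grad (x + 0 *\<^sub>R d) \<bullet> d - L * 0 * (norm d)\<^sup>2"
  proof (rule DERIV_nonpos_imp_nonincreasing[OF t])
    fix s assume "0 \<le> s" "s \<le> t"
    have "((\<lambda>s. grad (x + s *\<^sub>R d) \<bullet> d - L * s * (norm d)\<^sup>2) has_real_derivative
        (blinfun_apply (Hf (x + s *\<^sub>R d)) d \<bullet> d - L * (norm d)\<^sup>2)) (at s)"
      by (rule derivative_eq_intros deriv_line_grad[OF hess_f] | simp)+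
    then show "\<exists>y. ((\<lambda>s. grad (x + s *\<^sub>R d) \<bullet> d - L * s * (norm d)\<^sup>2) has_real_derivative y) (at s) \<and> y \<le> 0"
      using up[of "x + s *\<^sub>R d" d] by force
  qed
  then show "(grad (x + t *\<^sub>R d) - grad x) \<bullet> d \<le> L * t * (norm d)\<^sup>2" by (simp add: inner_diff_left)
qed



lemma f_upper_lower:
  fixes f :: "'a::euclidean_space \<Rightarrow> real" and grad :: "'a \<Rightarrow> 'a" and Hf :: "'a \<Rightarrow> ('a \<Rightarrow>\<^sub>L 'a)"
  assumes grad_f: "\<And>x. (f has_derivative (\<lambda>w. grad x \<bullet> w)) (at x)"
    and hess_f: "\<And>x. (grad has_derivative blinfun_apply (Hf x)) (at x)"
    and lo: "\<And>x w. 0 \<le> blinfun_apply (Hf x) w \<bullet> w"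
    and up: "\<And>x w. blinfun_apply (Hf x) w \<bullet> w \<le> L * (norm w)\<^sup>2"
  shows "f (x + d) \<le> f x + grad x \<bullet> d + L / 2 * (norm d)\<^sup>2"
    and "f x + grad x \<bullet> d \<le> f (x + d)"
proof -
  have "f (x + 1 *\<^sub>R d) - 1 * (grad x \<bullet> d) - L / 2 * 1\<^sup>2 * (norm d)\<^sup>2
      \<le> f (x + 0 *\<^sub>R d) - 0 * (grad x \<bullet> d) - L / 2 * 0\<^sup>2 * (norm d)\<^sup>2"
  proof (rule DERIV_nonpos_imp_nonincreasing[of 0 1])
    fix s :: real assume s: "0 \<le> s" "s \<le> 1"
    have "((\<lambda>s. f (x + s *\<^sub>R d) - s * (grad x \<bullet> d) - L / 2 * s\<^sup>2 * (norm d)\<^sup>2) has_real_derivative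
        (grad (x + s *\<^sub>R d) \<bullet> d - 1 * (grad x \<bullet> d) - L / 2 * (2 * s) * (norm d)\<^sup>2)) (at s)"
      by (rule derivative_eq_intros deriv_line_f[OF grad_f] | simp)+
    moreover have "grad (x + s *\<^sub>R d) \<bullet> d - 1 * (grad x \<bullet> d) - L / 2 * (2 * s) * (norm d)\<^sup>2 \<le> 0"
      using grad_mono_bounds(2)[OF hess_f lo up s(1), of x d] by (simp add: inner_diff_left)
    ultimately show "\<exists>y. ((\<lambda>s. f (x + s *\<^sub>R d) - s * (grad x \<bullet> d) - L / 2 * s\<^sup>2 * (norm d)\<^sup>2) has_real_derivative y) (at s) \<and> y \<le> 0"
      by blast
  qed simp
  then show "f (x + d) \<le> f x + grad x \<bullet> d + L / 2 * (norm d)\<^sup>2" by simp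
  have "f (x + 0 *\<^sub>R d) - 0 * (grad x \<bullet> d) \<le> f (x + 1 *\<^sub>R d) - 1 * (grad x \<bullet> d)"
  proof (rule DERIV_nonneg_imp_nondecreasing[of 0 1])
    fix s :: real assume s: "0 \<le> s" "s \<le> 1"
    have "((\<lambda>s. f (x + s *\<^sub>R d) - s * (grad x \<bullet> d)) has_real_derivative
        (grad (x + s *\<^sub>R d) \<bullet> d - 1 * (grad x \<bullet> d))) (at s)"
      by (rule derivative_eq_intros deriv_line_f[OF grad_f] | simp)+
    moreover have "0 \<le> grad (x + s *\<^sub>R d) \<bullet> d - 1 * (grad x \<bullet> d)"
      using grad_mono_bounds(1)[OF hess_f lo up s(1), of x d] by (simp add: inner_diff_left)
    ultimately show "\<exists>y. ((\<lambda>s. f (x + s *\<^sub>R d) - s * (grad x \<bullet> d)) has_real_derivative y) (at s) \<and> y \<ge> 0"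
      by blast
  qed simp
  then show "f x + grad x \<bullet> d \<le> f (x + d)" by simp
qed

lemma grad_lipschitz:
  fixes f :: "'a::euclidean_space \<Rightarrow> real" and grad :: "'a \<Rightarrow> 'a" and Hf :: "'a \<Rightarrow> ('a \<Rightarrow>\<^sub>L 'a)"
  assumes grad_f: "\<And>x. (f has_derivative (\<lambda>w. grad x \<bullet> w)) (at x)"
    and hess_f: "\<And>x. (grad has_derivative blinfun_apply (Hf x)) (at x)"
    and lo: "\<And>x w. 0 \<le> blinfun_apply (Hf x) w \<bullet> w"
    and up: "\<And>x w. blinfun_apply (Hf x) w \<bullet> w \<le> L * (norm w)\<^sup>2"
    and Lpos: "0 < L"
  shows "norm (grad y - grad x) \<le> L * norm (y - x)"
proof -
  note U = f_upper_lower(1)[OF grad_f hess_f lo up]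
  note Lo = f_upper_lower(2)[OF grad_f hess_f lo up]
  have cc: "(norm (grad y - grad x))\<^sup>2 / (2 * L) \<le> f y - f x - grad x \<bullet> (y - x)" for x y
  proof -
    define e where "e = grad y - grad x"
    define z where "z = y - (1 / L) *\<^sub>R e"
    have 1: "f x + grad x \<bullet> (z - x) \<le> f z" using Lo[of x "z - x"] by simp
    have 2: "f z \<le> f y + grad y \<bullet> (z - y) + L / 2 * (norm (z - y))\<^sup>2" using U[of y "z - y"] by simp
    have zy: "z - y = (- (1 / L)) *\<^sub>R e" by (simp add: z_def)
    have n: "(norm (z - y))\<^sup>2 = (1 / L)\<^sup>2 * (norm e)\<^sup>2" unfolding zy
      using Lpos by (simp add: power_divide)
    have zx: "grad x \<bullet> (z - x) = grad x \<bullet> (y - x) - (1 / L) * (grad x \<bullet> e)"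
      by (simp add: z_def inner_diff_right)
    have gy: "grad y \<bullet> (z - y) = - (1 / L) * (grad y \<bullet> e)" unfolding zy by simp
    have ee: "grad y \<bullet> e - grad x \<bullet> e = (norm e)\<^sup>2"
      by (simp add: e_def inner_diff_left power2_norm_eq_inner)
    have "f y - f x - grad x \<bullet> (y - x) \<ge> (1 / L) * (grad y \<bullet> e - grad x \<bullet> e) - L / 2 * ((1 / L)\<^sup>2 * (norm e)\<^sup>2)"
      using 1 2 n zx gy by (simp add: algebra_simps)
    also have "(1 / L) * (grad y \<bullet> e - grad x \<bullet> e) - L / 2 * ((1 / L)\<^sup>2 * (norm e)\<^sup>2) = (norm e)\<^sup>2 / (2 * L)"
      unfolding ee using Lpos by (simp add: field_simps power2_eq_square)
    finally show ?thesis by (simp add: e_def)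
  qed
  define e where "e = grad y - grad x"
  have "(norm e)\<^sup>2 / (2 * L) + (norm e)\<^sup>2 / (2 * L) \<le> (f y - f x - grad x \<bullet> (y - x)) + (f x - f y - grad y \<bullet> (x - y))"
    using cc[of x y] cc[of y x] by (simp add: e_def norm_minus_commute)
  also have "\<dots> = e \<bullet> (y - x)" by (simp add: e_def inner_diff_left inner_diff_right algebra_simps)
  also have "\<dots> \<le> norm e * norm (y - x)" by (rule norm_cauchy_schwarz)
  finally have "(norm e)\<^sup>2 \<le> L * (norm e * norm (y - x))" using Lpos by (simp add: field_simps)
  then have "norm e * norm e \<le> norm e * (L * norm (y - x))" by (simp add: power2_eq_square algebra_simps)
  then have "norm e \<le> L * norm (y - x)" if "norm e > 0" using that by simp
  moreover have "0 \<le> L * norm (y - x)" using Lpos by simp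
  ultimately show ?thesis unfolding e_def by (cases "norm (grad y - grad x) > 0") auto
qed



lemma diffusion_formula:
  fixes grad :: "'a::euclidean_space \<Rightarrow> 'a" and X V Bp :: "real \<Rightarrow> 'a"
  assumes gc: "continuous_on UNIV grad"
    and cX: "continuous_on {0..h} X" and cV: "continuous_on {0..h} V" and cB: "continuous_on {0..h} Bp"
    and B0: "Bp 0 = 0"
    and hX: "\<And>t. t \<in> {0..h} \<Longrightarrow> X t = xn + integral {0..t} V"
    and hV: "\<And>t. t \<in> {0..h} \<Longrightarrow> V t = vn - integral {0..t} (\<lambda>s. 2 *\<^sub>R V s + u *\<^sub>R grad (X s)) + (2 * sqrt u) *\<^sub>R Bp t"
    and t: "t \<in> {0..h}"
  shows "X t = xn + ((1 - exp (- 2 * t)) / 2) *\<^sub>R vn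
          - (u / 2) *\<^sub>R integral {0..t} (\<lambda>s. (1 - exp (- 2 * (t - s))) *\<^sub>R grad (X s))
          + sqrt u *\<^sub>R W1 Bp t"
proof -
  define S where "S = {0..h}"
  define G where "G = (\<lambda>s. grad (X s))"
  have cG: "continuous_on S G" unfolding G_def S_def
    by (rule continuous_on_compose2[OF gc cX]) auto
  have cV': "continuous_on S V" using cV by (simp add: S_def)
  have cB': "continuous_on S Bp" using cB by (simp add: S_def)
  define IG where "IG = (\<lambda>s. integral {0..s} G)"
  define IE where "IE = (\<lambda>s. integral {0..s} (\<lambda>r. exp (2 * r) *\<^sub>R G r))"
  define IB where "IB = (\<lambda>s. integral {0..s} (\<lambda>r. exp (2 * r) *\<^sub>R Bp r))"
  have cEG: "continuous_on S (\<lambda>r. exp (2 * r) *\<^sub>R G r)"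
    by (intro continuous_intros cG)
  have cEB: "continuous_on S (\<lambda>r. exp (2 * r) *\<^sub>R Bp r)"
    by (intro continuous_intros cB')
  have intS: "f integrable_on {0..s}" if "continuous_on S f" "s \<in> S" for f :: "real \<Rightarrow> 'a" and s
    apply (rule integrable_continuous_real)
    apply (rule continuous_on_subset[OF that(1)])
    using that(2) by (auto simp: S_def)
  have dX: "(X has_vector_derivative V s) (at s within S)" if "s \<in> S" for s
  proof -
    have "((\<lambda>u. xn + integral {0..u} V) has_vector_derivative (0 + V s)) (at s within S)"
      unfolding S_def
      by (intro derivative_intros integral_has_vector_derivative) (use cV that in \<open>auto simp: S_def\<close>)
    then have "((\<lambda>u. xn + integral {0..u} V) has_vector_derivative V s) (at s within S)" by simp
    then show ?thesis
      by (rule has_vector_derivative_transform[OF that, rotated]) (use hX in \<open>auto simp: S_def\<close>)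
  qed
  have dIG: "(IG has_vector_derivative G s) (at s within S)" if "s \<in> S" for s
    unfolding IG_def S_def by (rule integral_has_vector_derivative) (use cG that in \<open>auto simp: S_def\<close>)
  have dIE: "(IE has_vector_derivative (exp (2 * s) *\<^sub>R G s)) (at s within S)" if "s \<in> S" for s
    unfolding IE_def S_def by (rule integral_has_vector_derivative[where f="\<lambda>r. exp (2 * r) *\<^sub>R G r"]) (use cEG that in \<open>auto simp: S_def\<close>)
  have dIB: "(IB has_vector_derivative (exp (2 * s) *\<^sub>R Bp s)) (at s within S)" if "s \<in> S" for s
    unfolding IB_def S_def by (rule integral_has_vector_derivative[where f="\<lambda>r. exp (2 * r) *\<^sub>R Bp r"]) (use cEB that in \<open>auto simp: S_def\<close>)
  define D where "D = (\<lambda>s. exp (2 * s) *\<^sub>R X s - (exp (2 * s) *\<^sub>R xn + ((exp (2 * s) - 1) / 2) *\<^sub>R vn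
      - (u / 2) *\<^sub>R (exp (2 * s) *\<^sub>R IG s - IE s) + (2 * sqrt u) *\<^sub>R IB s))"
  have key: "V s + 2 *\<^sub>R X s - 2 *\<^sub>R xn - vn + u *\<^sub>R IG s - (2 * sqrt u) *\<^sub>R Bp s = 0" if "s \<in> S" for s
  proof -
    have "integral {0..s} (\<lambda>r. 2 *\<^sub>R V r + u *\<^sub>R grad (X r)) = 2 *\<^sub>R integral {0..s} V + u *\<^sub>R IG s"
      unfolding IG_def G_def
      by (subst integral_add) (use intS[OF cV' that] intS[OF cG that] in \<open>auto simp: G_def intro: integrable_cmul\<close>)
    moreover have "integral {0..s} V = X s - xn" using hX[of s] that by (simp add: S_def)
    ultimately have "V s = vn - (2 *\<^sub>R (X s - xn) + u *\<^sub>R IG s) + (2 * sqrt u) *\<^sub>R Bp s"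
      using hV[of s] that by (simp add: S_def)
    then show ?thesis by (simp add: algebra_simps)
  qed
  have dD: "(D has_vector_derivative 0) (at s within {0..t})" if s: "s \<in> {0..t}" for s
  proof -
    have sS: "s \<in> S" using s t by (auto simp: S_def)
    have "(D has_vector_derivative
        (exp (2 * s) *\<^sub>R V s + (exp (2 * s) * (2 * 1)) *\<^sub>R X s -
         (exp (2 * s) *\<^sub>R 0 + (exp (2 * s) * (2 * 1)) *\<^sub>R xn + (exp (2 * s) * (2 * 1) / 2) *\<^sub>R vn
          - (u / 2) *\<^sub>R ((exp (2 * s) *\<^sub>R G s + (exp (2 * s) * (2 * 1)) *\<^sub>R IG s) - exp (2 * s) *\<^sub>R G s)
          + (2 * sqrt u) *\<^sub>R (exp (2 * s) *\<^sub>R Bp s)))) (at s within S)"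
      unfolding D_def
      by (rule derivative_eq_intros dX[OF sS] dIG[OF sS] dIE[OF sS] dIB[OF sS] refl | simp)+
    also have "(exp (2 * s) *\<^sub>R V s + (exp (2 * s) * (2 * 1)) *\<^sub>R X s -
         (exp (2 * s) *\<^sub>R 0 + (exp (2 * s) * (2 * 1)) *\<^sub>R xn + (exp (2 * s) * (2 * 1) / 2) *\<^sub>R vn
          - (u / 2) *\<^sub>R ((exp (2 * s) *\<^sub>R G s + (exp (2 * s) * (2 * 1)) *\<^sub>R IG s) - exp (2 * s) *\<^sub>R G s)
          + (2 * sqrt u) *\<^sub>R (exp (2 * s) *\<^sub>R Bp s))) =
         exp (2 * s) *\<^sub>R (V s + 2 *\<^sub>R X s - 2 *\<^sub>R xn - vn + u *\<^sub>R IG s - (2 * sqrt u) *\<^sub>R Bp s)"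
      by (simp add: algebra_simps)
    also have "\<dots> = 0" using key[OF sS] by simp
    finally show ?thesis
      by (rule has_vector_derivative_within_subset) (use t in \<open>auto simp: S_def\<close>)
  qed
  have "((\<lambda>_. 0) has_integral (D t - D 0)) {0..t}"
    by (rule fundamental_theorem_of_calculus) (use t dD in auto)
  then have "D t = D 0" by simp
  moreover have "X 0 = xn" using hX[of 0] t by auto
  ultimately have Dt: "D t = 0" by (simp add: D_def IG_def IE_def IB_def)
  have e1: "integral {0..t} (\<lambda>s. (1 - exp (- 2 * (t - s))) *\<^sub>R grad (X s)) = IG t - exp (- 2 * t) *\<^sub>R IE t"
  proof -
    have "integral {0..t} (\<lambda>s. (1 - exp (- 2 * (t - s))) *\<^sub>R grad (X s))
        = integral {0..t} (\<lambda>s. G s - exp (- 2 * t) *\<^sub>R (exp (2 * s) *\<^sub>R G s))"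
      by (rule integral_cong) (simp add: G_def algebra_simps exp_add[symmetric] exp_diff)
    also have "\<dots> = IG t - exp (- 2 * t) *\<^sub>R IE t"
    proof -
      have iG: "G integrable_on {0..t}" using intS[OF cG] t by (simp add: S_def)
      have iE: "(\<lambda>r. exp (2 * r) *\<^sub>R G r) integrable_on {0..t}" using intS[OF cEG] t by (simp add: S_def)
      show ?thesis unfolding IG_def IE_def
        by (simp only: integral_diff[OF iG integrable_cmul[OF iE]] integral_cmul)
    qed
    finally show ?thesis .
  qed
  have e2: "W1 Bp t = (2 * exp (- 2 * t)) *\<^sub>R IB t"
  proof -
    have "W1 Bp t = - integral {0..t} (\<lambda>s. (- 2 * exp (- 2 * (t - s))) *\<^sub>R Bp s)"
      by (simp add: W1_def wiener_integral_def B0)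
    also have "integral {0..t} (\<lambda>s. (- 2 * exp (- 2 * (t - s))) *\<^sub>R Bp s)
        = integral {0..t} (\<lambda>s. (- 2 * exp (- 2 * t)) *\<^sub>R (exp (2 * s) *\<^sub>R Bp s))"
      by (rule integral_cong) (simp add: algebra_simps exp_add[symmetric])
    also have "\<dots> = (- 2 * exp (- 2 * t)) *\<^sub>R IB t" unfolding IB_def by (rule integral_cmul)
    finally show ?thesis by simp
  qed
  have "X t = exp (- 2 * t) *\<^sub>R (exp (2 * t) *\<^sub>R X t)"
    by (simp add: exp_add[symmetric])
  also have "exp (2 * t) *\<^sub>R X t = exp (2 * t) *\<^sub>R xn + ((exp (2 * t) - 1) / 2) *\<^sub>R vn
      - (u / 2) *\<^sub>R (exp (2 * t) *\<^sub>R IG t - IE t) + (2 * sqrt u) *\<^sub>R IB t"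
    using Dt by (simp add: D_def)
  also have "exp (- 2 * t) *\<^sub>R (exp (2 * t) *\<^sub>R xn + ((exp (2 * t) - 1) / 2) *\<^sub>R vn
      - (u / 2) *\<^sub>R (exp (2 * t) *\<^sub>R IG t - IE t) + (2 * sqrt u) *\<^sub>R IB t)
    = xn + ((1 - exp (- 2 * t)) / 2) *\<^sub>R vn
          - (u / 2) *\<^sub>R (IG t - exp (- 2 * t) *\<^sub>R IE t)
          + sqrt u *\<^sub>R ((2 * exp (- 2 * t)) *\<^sub>R IB t)"
    by (simp add: algebra_simps exp_add[symmetric] diff_divide_distrib)
  finally show ?thesis using e1 e2 by simp
qed



lemma integral_split_sum:
  fixes \<phi> :: "real \<Rightarrow> 'a::banach"
  assumes d: "0 < d" and i: "1 \<le> i" and ti: "(real i - 1) * d \<le> t" and c: "continuous_on {0..t} \<phi>"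
  shows "(\<Sum>j=1..i. integral {(real j - 1) * d .. min (real j * d) t} \<phi>) = integral {0..min (real i * d) t} \<phi>"
  using i ti
proof (induction i)
  case 0 then show ?case by simp
next
  case (Suc i)
  show ?case
  proof (cases "i = 0")
    case True then show ?thesis by simp
  next
    case False
    then have i1: "1 \<le> i" by simp
    have tid: "real i * d \<le> t" using Suc.prems by simp
    have IH: "(\<Sum>j=1..i. integral {(real j - 1) * d .. min (real j * d) t} \<phi>) = integral {0..real i * d} \<phi>"
    proof -
      have ti': "(real i - 1) * d \<le> t" using tid d by (simp add: left_diff_distrib)
      have "(\<Sum>j=1..i. integral {(real j - 1) * d .. min (real j * d) t} \<phi>) = integral {0..min (real i * d) t} \<phi>"
        by (rule Suc.IH[OF i1 ti'])
      also have "\<dots> = integral {0..real i * d} \<phi>" by (simp only: min_absorb1[OF tid])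
      finally show ?thesis .
    qed
    have int: "\<phi> integrable_on {0..min (real (Suc i) * d) t}"
      by (rule integrable_continuous_real, rule continuous_on_subset[OF c]) auto
    have "(\<Sum>j=1..Suc i. integral {(real j - 1) * d .. min (real j * d) t} \<phi>)
        = integral {0..real i * d} \<phi> + integral {real i * d .. min (real (Suc i) * d) t} \<phi>"
      using IH by (simp add: sum.cl_ivl_Suc)
    also have "\<dots> = integral {0..min (real (Suc i) * d) t} \<phi>"
      by (rule Henstock_Kurzweil_Integration.integral_combine[OF _ _ int]) (use tid d in \<open>auto simp: algebra_simps\<close>)
    finally show ?thesis .
  qed
qed

lemma one_step_bound:
  fixes grad :: "'a::euclidean_space \<Rightarrow> 'a" and X :: "real \<Rightarrow> 'a" and Wf :: "real \<Rightarrow> 'a"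
  assumes Lpos: "0 < L" and u: "u = 1 / L"
    and lip: "\<And>x y. norm (grad y - grad x) \<le> L * norm (y - x)"
    and gc: "continuous_on UNIV grad"
    and cX: "continuous_on {0..h} X"
    and form: "\<And>t. t \<in> {0..h} \<Longrightarrow> X t = xn + ((1 - exp (- 2 * t)) / 2) *\<^sub>R vn
          - (u / 2) *\<^sub>R integral {0..t} (\<lambda>s. (1 - exp (- 2 * (t - s))) *\<^sub>R grad (X s))
          + sqrt u *\<^sub>R Wf t"
    and R: "1 \<le> R" and dpos: "0 < \<delta>" and h: "h = real R * \<delta>"
    and arange: "\<And>j. j \<in> {1..R} \<Longrightarrow> a j * h \<in> {(real j - 1) * \<delta> .. real j * \<delta>}"
    and W: "\<And>j. W j = Wf (a j * h)"
    and S: "\<And>j s. j \<in> {1..R} \<Longrightarrow> s \<in> {(real j - 1) * \<delta> .. real j * \<delta>} \<Longrightarrow> norm (X (a j * h) - X s) \<le> S j"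
    and i: "i \<in> {1..R}"
  shows "norm (alg2_iter grad u h R xn vn a W (Suc k) i - X (a i * h))
     \<le> h * \<delta> * (\<Sum>j=1..R. norm (alg2_iter grad u h R xn vn a W k j - X (a j * h)) + S j)"
proof -
  define t where "t = a i * h"
  have hR: "h / real R = \<delta>" using R h by simp
  have t1: "(real i - 1) * \<delta> \<le> t" "t \<le> real i * \<delta>" using arange[OF i] by (auto simp: t_def)
  have ti: "real i \<le> real R" using i by simp
  have t0: "0 \<le> t" using t1 i dpos by (smt (verit) atLeastAtMost_iff mult_nonneg_nonneg of_nat_1 of_nat_mono)
  have th: "t \<le> h" using t1(2) ti dpos h by (smt (verit) mult_right_mono)
  define w where "w = (\<lambda>s. 1 - exp (- 2 * (t - s)))"
  define J where "J = (\<lambda>j::nat. {(real j - 1) * \<delta> .. min (real j * \<delta>) t})"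
  define g where "g = (\<lambda>j. grad (alg2_iter grad u h R xn vn a W k j))"
  define e where "e = (\<lambda>j. norm (alg2_iter grad u h R xn vn a W k j - X (a j * h)))"
  have cw: "continuous_on A w" for A by (unfold w_def, intro continuous_intros)
  have cG: "continuous_on {0..t} (\<lambda>s. w s *\<^sub>R grad (X s))"
    apply (intro continuous_intros cw)
    apply (rule continuous_on_compose2[OF gc continuous_on_subset[OF cX]])
    using th by auto
  have Jsub: "J j \<subseteq> {0..t}" if "j \<in> {1..i}" for j
    using that dpos by (auto simp: J_def)
  have mint: "min (real i * \<delta>) t = t" using t1 by simp
  have split: "integral {0..t} (\<lambda>s. w s *\<^sub>R grad (X s)) = (\<Sum>j=1..i. integral (J j) (\<lambda>s. w s *\<^sub>R grad (X s)))"
    using integral_split_sum[OF dpos _ t1(1) cG] i mint by (simp add: J_def)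
  have alg: "alg2_iter grad u h R xn vn a W (Suc k) i = xn + ((1 - exp (- 2 * t)) / 2) *\<^sub>R vn
     - (u / 2) *\<^sub>R (\<Sum>j=1..i. integral (J j) w *\<^sub>R g j) + sqrt u *\<^sub>R Wf t"
    by (simp add: hR J_def w_def g_def W t_def)
  have Xt: "X t = xn + ((1 - exp (- 2 * t)) / 2) *\<^sub>R vn
          - (u / 2) *\<^sub>R (\<Sum>j=1..i. integral (J j) (\<lambda>s. w s *\<^sub>R grad (X s))) + sqrt u *\<^sub>R Wf t"
    using form[of t] t0 th split by (simp add: w_def)
  have diff: "alg2_iter grad u h R xn vn a W (Suc k) i - X t
      = - (u / 2) *\<^sub>R (\<Sum>j=1..i. integral (J j) w *\<^sub>R g j - integral (J j) (\<lambda>s. w s *\<^sub>R grad (X s)))"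
    unfolding alg Xt by (simp add: algebra_simps sum_subtractf)
  have termb: "norm (integral (J j) w *\<^sub>R g j - integral (J j) (\<lambda>s. w s *\<^sub>R grad (X s)))
      \<le> (2 * h * L * (e j + S j)) * \<delta>" if j: "j \<in> {1..i}" for j
  proof -
    have jR: "j \<in> {1..R}" using j i by auto
    have iw: "w integrable_on J j"
      unfolding J_def by (rule integrable_continuous_real) (simp add: cw)
    have iG: "(\<lambda>s. w s *\<^sub>R grad (X s)) integrable_on J j"
    proof -
      have "continuous_on (J j) (\<lambda>s. w s *\<^sub>R grad (X s))" by (rule continuous_on_subset[OF cG Jsub[OF j]])
      then show ?thesis unfolding J_def by (rule integrable_continuous_real)
    qed
    have hi: "((\<lambda>s. w s *\<^sub>R g j - w s *\<^sub>R grad (X s)) has_integral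
        (integral (J j) w *\<^sub>R g j - integral (J j) (\<lambda>s. w s *\<^sub>R grad (X s)))) (J j)"
      by (intro has_integral_diff has_integral_scaleR_left integrable_integral iw iG)
    have pw: "norm (w s *\<^sub>R g j - w s *\<^sub>R grad (X s)) \<le> 2 * h * L * (e j + S j)" if s: "s \<in> J j" for s
    proof -
      have s0: "(real j - 1) * \<delta> \<le> s" "s \<le> t" "s \<le> real j * \<delta>" using s by (auto simp: J_def)
      have w0: "0 \<le> w s" using s0 by (simp add: w_def)
      have w1: "w s \<le> 2 * (t - s)"
      proof -
        have "1 + (2 * s - 2 * t) \<le> exp (2 * s - 2 * t)" by (rule exp_ge_add_one_self)
        then show ?thesis by (simp add: w_def algebra_simps)
      qed
      have sge: "0 \<le> s" using s0(1) j dpos by (smt (verit) atLeastAtMost_iff mult_nonneg_nonneg of_nat_1 of_nat_mono)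
      have w2: "w s \<le> 2 * h" using w1 sge th by (simp add: algebra_simps)
      have "norm (g j - grad (X s)) \<le> L * norm (alg2_iter grad u h R xn vn a W k j - X s)"
        unfolding g_def using lip by (metis norm_minus_commute)
      also have "norm (alg2_iter grad u h R xn vn a W k j - X s) \<le> e j + norm (X (a j * h) - X s)"
        unfolding e_def using norm_triangle_ineq[of "alg2_iter grad u h R xn vn a W k j - X (a j * h)" "X (a j * h) - X s"]
        by simp
      also have "\<dots> \<le> e j + S j" using S[OF jR, of s] s0 by simp
      finally have ng: "norm (g j - grad (X s)) \<le> L * (e j + S j)" using Lpos by simp
      have "norm (w s *\<^sub>R g j - w s *\<^sub>R grad (X s)) = w s * norm (g j - grad (X s))"
        using w0 by (simp add: scaleR_diff_right[symmetric])
      also have "\<dots> \<le> (2 * h) * (L * (e j + S j))"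
        by (rule mult_mono[OF w2 ng]) (use th t0 in auto)
      finally show ?thesis by simp
    qed
    have B0: "0 \<le> 2 * h * L * (e j + S j)"
    proof -
      have "real j * \<delta> \<in> {(real j - 1) * \<delta> .. real j * \<delta>}" using dpos by (auto simp: algebra_simps)
      then have "0 \<le> S j" using S[OF jR, of "real j * \<delta>"] by (meson norm_ge_zero order_trans)
      then show ?thesis using Lpos th t0 by (simp add: e_def)
    qed
    have "norm (integral (J j) w *\<^sub>R g j - integral (J j) (\<lambda>s. w s *\<^sub>R grad (X s))) \<le> (2 * h * L * (e j + S j)) * Henstock_Kurzweil_Integration.content (J j)"
      unfolding J_def by (rule has_integral_bound_real[OF B0 finite.emptyI hi[unfolded J_def]]) (use pw in \<open>auto simp: J_def\<close>)
    also have "Henstock_Kurzweil_Integration.content (J j) \<le> \<delta>" using dpos by (auto simp: J_def content_real_if algebra_simps min_def)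
    then have "(2 * h * L * (e j + S j)) * Henstock_Kurzweil_Integration.content (J j) \<le> (2 * h * L * (e j + S j)) * \<delta>"
      by (rule mult_left_mono[OF _ B0])
    finally show ?thesis .
  qed
  have Snn: "0 \<le> S j" if "j \<in> {1..R}" for j
  proof -
    have "real j * \<delta> \<in> {(real j - 1) * \<delta> .. real j * \<delta>}" using dpos by (auto simp: algebra_simps)
    then show "0 \<le> S j" using S[OF that, of "real j * \<delta>"] by (meson norm_ge_zero order_trans)
  qed
  have "norm (alg2_iter grad u h R xn vn a W (Suc k) i - X t)
      = (u / 2) * norm (\<Sum>j=1..i. integral (J j) w *\<^sub>R g j - integral (J j) (\<lambda>s. w s *\<^sub>R grad (X s)))"
    unfolding diff using Lpos u by simp
  also have "\<dots> \<le> (u / 2) * (\<Sum>j=1..i. (2 * h * L * (e j + S j)) * \<delta>)"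
    by (rule mult_left_mono[OF order_trans[OF norm_sum sum_mono[OF termb]]]) (use Lpos u in auto)
  also have "\<dots> = (\<Sum>j=1..i. h * \<delta> * (e j + S j))"
    unfolding sum_distrib_left by (rule sum.cong[OF refl]) (use Lpos in \<open>simp add: u field_simps\<close>)
  also have "\<dots> = h * \<delta> * (\<Sum>j=1..i. e j + S j)" by (simp only: sum_distrib_left)
  also have "\<dots> \<le> h * \<delta> * (\<Sum>j=1..R. e j + S j)"
    apply (rule mult_left_mono)
     apply (rule sum_mono2) using i Snn apply (auto simp: e_def intro!: add_nonneg_nonneg)
    using th t0 dpos by simp
  finally show ?thesis by (simp add: t_def e_def)
qed



lemma recursion_bound:
  fixes e :: "nat \<Rightarrow> nat \<Rightarrow> real" and S :: "nat \<Rightarrow> real" and R :: nat and \<delta> h :: real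
  assumes R: "1 \<le> R" and dpos: "0 < \<delta>" and h: "h = real R * \<delta>"
    and small: "(real R)^4 * \<delta>^4 \<le> 1 / 4"
    and e0: "\<And>k j. 0 \<le> e k j" and Snn: "\<And>j. 0 \<le> S j"
    and step: "\<And>k i. i \<in> {1..R} \<Longrightarrow> e (Suc k) i \<le> h * \<delta> * (\<Sum>j=1..R. e k j + S j)"
    and i: "i \<in> {1..R}" and k: "1 \<le> k"
  shows "(e k i)\<^sup>2 \<le> (2 * (real R)^4 * \<delta>^4) ^ k * (1 / real R) * (\<Sum>j=1..R. (e 0 j)\<^sup>2)
           + 4 * (real R)^3 * \<delta>^4 * (\<Sum>j=1..R. (S j)\<^sup>2)"
proof -
  define q where "q = 2 * (real R)^4 * \<delta>^4"
  define C where "C = 2 * (real R)^3 * \<delta>^4 * (\<Sum>j=1..R. (S j)\<^sup>2)"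
  define b where "b = (\<lambda>k. (1 / real R) * (\<Sum>j=1..R. (e k j)\<^sup>2))"
  have Rpos: "0 < real R" using R by simp
  have q0: "0 \<le> q" and q12: "q \<le> 1 / 2" using small by (auto simp: q_def)
  have C0: "0 \<le> C" unfolding C_def using dpos by (auto intro!: sum_nonneg mult_nonneg_nonneg)
  have b0: "0 \<le> b k" for k unfolding b_def using Rpos by (intro mult_nonneg_nonneg sum_nonneg) auto
  have sq: "(e (Suc k) i)\<^sup>2 \<le> q * b k + C" if i: "i \<in> {1..R}" for k i
  proof -
    have s0: "0 \<le> (\<Sum>j=1..R. e k j + S j)" using e0 Snn by (auto intro!: sum_nonneg add_nonneg_nonneg)
    have "(e (Suc k) i)\<^sup>2 \<le> (h * \<delta> * (\<Sum>j=1..R. e k j + S j))\<^sup>2"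
      by (rule power_mono[OF step[OF i] e0])
    also have "\<dots> = (h * \<delta>)\<^sup>2 * (\<Sum>j=1..R. e k j + S j)\<^sup>2" by (simp add: power_mult_distrib)
    also have "\<dots> \<le> (h * \<delta>)\<^sup>2 * ((\<Sum>j=1..R. (e k j + S j)\<^sup>2) * real R)"
      by (rule mult_left_mono[OF order_trans[OF sum_squared_le_sum_of_squares]]) auto
    also have "\<dots> \<le> (h * \<delta>)\<^sup>2 * ((\<Sum>j=1..R. 2 * ((e k j)\<^sup>2 + (S j)\<^sup>2)) * real R)"
    proof -
      have "(\<Sum>j=1..R. (e k j + S j)\<^sup>2) \<le> (\<Sum>j=1..R. 2 * ((e k j)\<^sup>2 + (S j)\<^sup>2))"
      proof (rule sum_mono)
        fix j
        have "0 \<le> (e k j - S j)\<^sup>2" by simp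
        then show "(e k j + S j)\<^sup>2 \<le> 2 * ((e k j)\<^sup>2 + (S j)\<^sup>2)" by (simp add: power2_eq_square algebra_simps)
      qed
      then show ?thesis using Rpos by (intro mult_left_mono mult_right_mono) auto
    qed
    also have "\<dots> = q * b k + C"
    proof -
      define A where "A = (\<Sum>j=1..R. (e k j)\<^sup>2)"
      define B where "B = (\<Sum>j=1..R. (S j)\<^sup>2)"
      have "(\<Sum>j=1..R. 2 * ((e k j)\<^sup>2 + (S j)\<^sup>2)) = 2 * A + 2 * B"
        by (simp add: A_def B_def sum.distrib sum_distrib_left)
      moreover have "(h * \<delta>)\<^sup>2 * ((2 * A + 2 * B) * real R) = q * ((1 / real R) * A) + 2 * (real R)^3 * \<delta>^4 * B"
        using Rpos by (simp add: h q_def field_simps power2_eq_square power4_eq_xxxx power3_eq_cube)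
      ultimately show ?thesis by (simp add: b_def C_def A_def B_def)
    qed
    finally show ?thesis .
  qed
  have bk: "b k \<le> q ^ k * b 0 + 2 * C" for k
  proof (induction k)
    case 0 then show ?case using C0 by simp
  next
    case (Suc k)
    have "b (Suc k) \<le> (1 / real R) * (\<Sum>j=1..R. q * b k + C)"
    proof -
      have "b (Suc k) = (1 / real R) * (\<Sum>j=1..R. (e (Suc k) j)\<^sup>2)" by (simp add: b_def)
      also have "\<dots> \<le> (1 / real R) * (\<Sum>j=1..R. q * b k + C)"
        using Rpos by (intro mult_left_mono sum_mono sq) auto
      finally show ?thesis .
    qed
    also have "\<dots> = q * b k + C" using Rpos by simp
    also have "\<dots> \<le> q * (q ^ k * b 0 + 2 * C) + C" using Suc.IH q0 by (intro add_right_mono mult_left_mono) auto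
    also have "\<dots> \<le> q ^ Suc k * b 0 + 2 * C" using q12 C0 by (simp add: algebra_simps) (metis mult_left_le)
    finally show ?case .
  qed
  obtain k' where k': "k = Suc k'" using k by (cases k) auto
  have "(e k i)\<^sup>2 \<le> q * b k' + C" unfolding k' by (rule sq[OF i])
  also have "\<dots> \<le> q * (q ^ k' * b 0 + 2 * C) + C" using bk[of k'] q0 by (intro add_right_mono mult_left_mono) auto
  also have "\<dots> \<le> q ^ k * b 0 + 2 * C" using q12 C0 k' by (simp add: algebra_simps) (metis mult_left_le)
  finally show ?thesis by (simp add: q_def b_def C_def mult.assoc)
qed



lemma meas_comp:
  fixes X :: "real \<Rightarrow> 'w \<Rightarrow> 'a::euclidean_space"
  assumes hpos: "0 < h" and c: "c \<in> borel_measurable M" and crange: "\<And>\<omega>. \<omega> \<in> space M \<Longrightarrow> c \<omega> \<in> {0..h}"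
    and Xm: "\<And>t. t \<in> {0..h} \<Longrightarrow> X t \<in> borel_measurable M"
    and Xc: "\<And>\<omega>. \<omega> \<in> space M \<Longrightarrow> continuous_on {0..h} (\<lambda>t. X t \<omega>)"
  shows "(\<lambda>\<omega>. X (c \<omega>) \<omega>) \<in> borel_measurable M"
proof -
  define tn where "tn = (\<lambda>(n::nat) (m::int). max 0 (min h (real_of_int m * h / real (Suc n))))"
  define fl where "fl = (\<lambda>(n::nat) \<omega>. \<lfloor>real (Suc n) * c \<omega> / h\<rfloor>)"
  have tn_range: "tn n m \<in> {0..h}" for n m using hpos by (auto simp: tn_def)
  have flm: "fl n \<in> measurable M (count_space UNIV)" for n
    unfolding fl_def by (rule measurable_compose[OF _ measurable_real_floor]) (use c in simp)
  have mn: "(\<lambda>\<omega>. X (tn n (fl n \<omega>)) \<omega>) \<in> borel_measurable M" for n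
    by (rule measurable_compose_countable'[where I=UNIV, OF Xm[OF tn_range] flm]) auto
  show ?thesis
  proof (rule borel_measurable_LIMSEQ_metric[OF mn])
    fix \<omega> assume \<omega>: "\<omega> \<in> space M"
    have cr: "c \<omega> \<in> {0..h}" using crange[OF \<omega>] .
    have lim: "(\<lambda>n. tn n (fl n \<omega>)) \<longlonglongrightarrow> c \<omega>"
    proof (rule tendsto_sandwich[where f="\<lambda>n. c \<omega> - h / real (Suc n)" and h="\<lambda>n. c \<omega>"])
      show "\<forall>\<^sub>F n in sequentially. c \<omega> - h / real (Suc n) \<le> tn n (fl n \<omega>)"
      proof (rule always_eventually, rule allI)
        fix n
        let ?y = "real (Suc n) * c \<omega> / h"
        have f1: "?y - 1 < real_of_int (fl n \<omega>)" unfolding fl_def by linarith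
        have "real_of_int (fl n \<omega>) * h / real (Suc n) > (?y - 1) * h / real (Suc n)"
          using f1 hpos by (intro divide_strict_right_mono mult_strict_right_mono) auto
        also have "(?y - 1) * h / real (Suc n) = ?y * h / real (Suc n) - h / real (Suc n)"
          by (simp add: left_diff_distrib diff_divide_distrib)
        also have "?y * h / real (Suc n) = c \<omega>"
        proof -
          have "?y * h = real (Suc n) * c \<omega>" using hpos by simp
          then show ?thesis by simp
        qed
        finally have "c \<omega> - h / real (Suc n) < real_of_int (fl n \<omega>) * h / real (Suc n)" .
        moreover have "0 \<le> h / real (Suc n)" using hpos by simp
        ultimately show "c \<omega> - h / real (Suc n) \<le> tn n (fl n \<omega>)"
          using cr unfolding tn_def atLeastAtMost_iff by (smt (verit))
      qed
      show "\<forall>\<^sub>F n in sequentially. tn n (fl n \<omega>) \<le> c \<omega>"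
      proof (rule always_eventually, rule allI)
        fix n
        let ?y = "real (Suc n) * c \<omega> / h"
        have f1: "real_of_int (fl n \<omega>) \<le> ?y" unfolding fl_def by linarith
        have "real_of_int (fl n \<omega>) * h / real (Suc n) \<le> ?y * h / real (Suc n)"
          using f1 hpos by (intro divide_right_mono mult_right_mono) auto
        also have "?y * h / real (Suc n) = c \<omega>"
        proof -
          have "?y * h = real (Suc n) * c \<omega>" using hpos by simp
          then show ?thesis by simp
        qed
        finally show "tn n (fl n \<omega>) \<le> c \<omega>" using cr by (auto simp: tn_def)
      qed
      have hn0: "(\<lambda>n. h / real (Suc n)) \<longlonglongrightarrow> 0"
        using LIMSEQ_Suc[OF lim_const_over_n[of h]] by simp
      show "(\<lambda>n. c \<omega> - h / real (Suc n)) \<longlonglongrightarrow> c \<omega>"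
        using tendsto_diff[OF tendsto_const[of "c \<omega>"] hn0] by simp
    qed simp
    show "(\<lambda>n. X (tn n (fl n \<omega>)) \<omega>) \<longlonglongrightarrow> X (c \<omega>) \<omega>"
      by (rule continuous_on_tendsto_compose[OF Xc[OF \<omega>] lim cr]) (intro always_eventually allI tn_range)
  qed
qed

lemma sup_dense_eq:
  fixes \<phi> :: "real \<Rightarrow> real"
  assumes ab: "a < b" and c: "continuous_on {a..b} \<phi>"
  shows "(SUP s\<in>{a..b}. ennreal (\<phi> s)) = (SUP s\<in>insert a (insert b ({a<..<b} \<inter> \<rat>)). ennreal (\<phi> s))"
proof (rule antisym)
  let ?D = "insert a (insert b ({a<..<b} \<inter> \<rat>))"
  show "(SUP s\<in>{a..b}. ennreal (\<phi> s)) \<le> (SUP s\<in>?D. ennreal (\<phi> s))"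
  proof (rule SUP_least)
    fix s assume s: "s \<in> {a..b}"
    show "ennreal (\<phi> s) \<le> (SUP s\<in>?D. ennreal (\<phi> s))"
    proof (cases "s = a \<or> s = b")
      case True then show ?thesis by (intro SUP_upper) auto
    next
      case False
      then have "s \<in> {a<..<b}" using s by auto
      then have "s \<in> {a<..<b} \<inter> closure \<rat>" by (simp add: Rats_closure_real)
      then have "s \<in> closure ({a<..<b} \<inter> \<rat>)" using open_Int_closure_subset[of "{a<..<b}" \<rat>] by auto
      then obtain r where r: "\<And>n. r n \<in> {a<..<b} \<inter> \<rat>" and rl: "r \<longlonglongrightarrow> s"
        unfolding closure_sequential by blast
      have "(\<lambda>n. \<phi> (r n)) \<longlonglongrightarrow> \<phi> s"
      proof (rule continuous_on_tendsto_compose[OF c rl])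
        show "s \<in> {a..b}" using s .
        show "\<forall>\<^sub>F n in sequentially. r n \<in> {a..b}" using r by (intro always_eventually) (auto intro: less_imp_le)
      qed
      then have "(\<lambda>n. ennreal (\<phi> (r n))) \<longlonglongrightarrow> ennreal (\<phi> s)" by (rule tendsto_ennrealI)
      then show ?thesis
        by (rule LIMSEQ_le_const2) (intro exI[of _ 0] allI impI SUP_upper, use r in auto)
    qed
  qed
  show "(SUP s\<in>?D. ennreal (\<phi> s)) \<le> (SUP s\<in>{a..b}. ennreal (\<phi> s))"
    by (rule SUP_subset_mono) (use ab in auto)
qed



theorem lemma13:
  fixes f :: "'a::euclidean_space \<Rightarrow> real"
    and grad :: "'a \<Rightarrow> 'a"
    and Hf :: "'a \<Rightarrow> ('a \<Rightarrow>\<^sub>L 'a)"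
    and m L u h \<delta> :: real
    and R K k i :: nat
    and M :: "'w measure"
    and B :: "real \<Rightarrow> 'w \<Rightarrow> 'a"
    and \<alpha> :: "nat \<Rightarrow> 'w \<Rightarrow> real"
    and xn vn :: 'a
    and xs vs :: "real \<Rightarrow> 'w \<Rightarrow> 'a"
  assumes grad_f: "\<And>x. (f has_derivative (\<lambda>w. grad x \<bullet> w)) (at x)"
    and hess_f: "\<And>x. (grad has_derivative blinfun_apply (Hf x)) (at x)"
    and hess_cont: "continuous_on UNIV Hf"
    and m_pos: "0 < m"
    and hess_lower: "\<And>x w. m * (norm w)\<^sup>2 \<le> blinfun_apply (Hf x) w \<bullet> w"
    and hess_upper: "\<And>x w. blinfun_apply (Hf x) w \<bullet> w \<le> L * (norm w)\<^sup>2"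
    and u_def: "u = 1 / L"
    and R_ge: "1 \<le> R"
    and delta_pos: "0 < \<delta>"
    and h_def: "h = real R * \<delta>"
    and small: "(real R)^4 * \<delta>^4 \<le> 1 / 4"
    and BM: "std_brownian_motion M h B"
    and alpha_unif: "\<And>j. j \<in> {1..R} \<Longrightarrow>
           distr M lborel (\<alpha> j) = uniform_measure lborel {(real j - 1) / real R .. real j / real R}"
    and alpha_indep: "prob_space.indep_vars M (\<lambda>_. lborel) \<alpha> {1..R}"
    and alpha_B_indep: "prob_space.indep_set M
           (sigma_sets (space M) (\<Union>j\<in>{1..R}. {\<alpha> j -` A \<inter> space M | A. A \<in> sets borel}))
           (sigma_sets (space M) (\<Union>t\<in>{0..h}. {B t -` A \<inter> space M | A. A \<in> sets borel}))"
    and diff_meas: "\<And>t. t \<in> {0..h} \<Longrightarrow> xs t \<in> borel_measurable M \<and> vs t \<in> borel_measurable M"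
    and diff_cont: "\<And>\<omega>. \<omega> \<in> space M \<Longrightarrow>
           continuous_on {0..h} (\<lambda>t. xs t \<omega>) \<and> continuous_on {0..h} (\<lambda>t. vs t \<omega>)"
    and diff_x: "\<And>\<omega> t. \<omega> \<in> space M \<Longrightarrow> t \<in> {0..h} \<Longrightarrow>
           xs t \<omega> = xn + integral {0..t} (\<lambda>s. vs s \<omega>)"
    and diff_v: "\<And>\<omega> t. \<omega> \<in> space M \<Longrightarrow> t \<in> {0..h} \<Longrightarrow>
           vs t \<omega> = vn - integral {0..t} (\<lambda>s. 2 *\<^sub>R vs s \<omega> + u *\<^sub>R grad (xs s \<omega>))
                      + (2 * sqrt u) *\<^sub>R B t \<omega>"
    and i_range: "i \<in> {1..R}"
    and k_range: "1 \<le> k" "k \<le> K - 1"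
  shows "(\<integral>\<^sup>+\<omega>. ennreal ((norm (alg2_iter grad u h R xn vn (\<lambda>j. \<alpha> j \<omega>)
                              (\<lambda>j. W1 (\<lambda>s. B s \<omega>) (\<alpha> j \<omega> * h)) k i
                            - xs (\<alpha> i \<omega> * h) \<omega>))\<^sup>2) \<partial>M)
         \<le> ennreal ((2 * (real R)^4 * \<delta>^4) ^ k) * ennreal (1 / real R) *
             (\<Sum>j=1..R. \<integral>\<^sup>+\<omega>. ennreal ((norm (xn - xs (\<alpha> j \<omega> * h) \<omega>))\<^sup>2) \<partial>M)
           + ennreal (4 * (real R)^3 * \<delta>^4) *
             (\<Sum>j=1..R. \<integral>\<^sup>+\<omega>. (SUP s\<in>{(real j - 1) * \<delta> .. real j * \<delta>}.
                  ennreal ((norm (xs (\<alpha> j \<omega> * h) \<omega> - xs s \<omega>))\<^sup>2)) \<partial>M)"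
proof -
  have BMd: "prob_space M" "\<forall>t\<in>{0..h}. B t \<in> borel_measurable M"
    "\<forall>\<omega>\<in>space M. B 0 \<omega> = 0 \<and> continuous_on {0..h} (\<lambda>t. B t \<omega>)"
    using BM unfolding std_brownian_motion_def by auto
  interpret P: prob_space M by (rule BMd(1))
  have am: "\<alpha> j \<in> borel_measurable M" if "j \<in> {1..R}" for j
    using alpha_indep that unfolding P.indep_vars_def by auto
  have Rpos: "0 < real R" using R_ge by simp
  have hpos: "0 < h" using Rpos delta_pos h_def by simp
  have Lpos: "0 < L"
  proof -
    obtain b :: 'a where b: "b \<in> Basis" using nonempty_Basis by blast
    have "m * (norm b)\<^sup>2 \<le> L * (norm b)\<^sup>2"
      using hess_lower[where x=0 and w=b] hess_upper[where x=0 and w=b] by linarith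
    then have "m \<le> L" using b by simp
    then show ?thesis using m_pos by simp
  qed
  have upos: "0 < u" using Lpos u_def by simp
  have lo: "0 \<le> blinfun_apply (Hf x) w \<bullet> w" for x w
  proof -
    have "0 \<le> m * (norm w)\<^sup>2" using m_pos by simp
    then show ?thesis using hess_lower[where x=x and w=w] by linarith
  qed
  have lip: "norm (grad y - grad x) \<le> L * norm (y - x)" for x y
    by (rule grad_lipschitz[OF grad_f hess_f lo hess_upper Lpos])
  have gc: "continuous_on UNIV grad"
    by (intro continuous_at_imp_continuous_on ballI has_derivative_continuous[OF hess_f])
  define I where "I = (\<lambda>j::nat. {(real j - 1) * \<delta> .. real j * \<delta>})"
  define Iu where "Iu = (\<lambda>j::nat. {(real j - 1) / real R .. real j / real R})"
  have AEj: "AE \<omega> in M. \<alpha> j \<omega> \<in> Iu j" if j: "j \<in> {1..R}" for j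
  proof -
    have "AE x in distr M lborel (\<alpha> j). x \<in> Iu j"
      unfolding alpha_unif[OF j] Iu_def by (rule AE_uniform_measureI) auto
    then show ?thesis by (rule AE_distrD[rotated]) (use am[OF j] in simp)
  qed
  have AEall: "AE \<omega> in M. \<forall>j\<in>{1..R}. \<alpha> j \<omega> \<in> Iu j"
    using AEj by (subst AE_ball_countable) auto
  have ah: "\<alpha> j \<omega> * h \<in> I j" if "\<alpha> j \<omega> \<in> Iu j" for j \<omega>
  proof -
    have "(real j - 1) / real R * h = (real j - 1) * \<delta>" "real j / real R * h = real j * \<delta>"
      using Rpos by (simp_all add: h_def)
    moreover have "(real j - 1) / real R * h \<le> \<alpha> j \<omega> * h"
      by (rule mult_right_mono) (use that hpos in \<open>auto simp: Iu_def\<close>)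
    moreover have "\<alpha> j \<omega> * h \<le> real j / real R * h"
      by (rule mult_right_mono) (use that hpos in \<open>auto simp: Iu_def\<close>)
    ultimately show ?thesis by (simp add: I_def)
  qed
  have I0h: "I j \<subseteq> {0..h}" if "j \<in> {1..R}" for j
  proof -
    have "0 \<le> (real j - 1) * \<delta>" using that delta_pos by simp
    moreover have "real j * \<delta> \<le> h" using that delta_pos by (simp add: h_def)
    ultimately show ?thesis by (auto simp: I_def)
  qed
  define c where "c = (\<lambda>j \<omega>. max 0 (min h (\<alpha> j \<omega> * h)))"
  define Y where "Y = (\<lambda>j \<omega>. xs (c j \<omega>) \<omega>)"
  have Ym: "Y j \<in> borel_measurable M" if j: "j \<in> {1..R}" for j
    unfolding Y_def
  proof (rule meas_comp[OF hpos])
    show "c j \<in> borel_measurable M" unfolding c_def using am[OF j] by measurable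
    show "c j \<omega> \<in> {0..h}" for \<omega> using hpos by (auto simp: c_def)
    show "xs t \<in> borel_measurable M" if "t \<in> {0..h}" for t using diff_meas[OF that] by simp
    show "continuous_on {0..h} (\<lambda>t. xs t \<omega>)" if "\<omega> \<in> space M" for \<omega> using diff_cont[OF that] by simp
  qed
  have cjeq: "c j \<omega> = \<alpha> j \<omega> * h" if "j \<in> {1..R}" "\<alpha> j \<omega> \<in> Iu j" for j \<omega>
  proof -
    have "\<alpha> j \<omega> * h \<in> {0..h}" using ah[OF that(2)] I0h[OF that(1)] by auto
    then show ?thesis by (simp add: c_def)
  qed
  define ft where "ft = (\<lambda>j \<omega>. ennreal ((norm (xn - Y j \<omega>))\<^sup>2))"
  define Gt where "Gt = (\<lambda>j \<omega>. SUP s\<in>I j. ennreal ((norm (Y j \<omega> - xs s \<omega>))\<^sup>2))"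
  have ftm: "ft j \<in> borel_measurable M" if j: "j \<in> {1..R}" for j
    unfolding ft_def using Ym[OF j] by measurable
  have Gtm: "Gt j \<in> borel_measurable M" if j: "j \<in> {1..R}" for j
  proof -
    define D where "D = insert ((real j - 1) * \<delta>) (insert (real j * \<delta>) ({(real j - 1) * \<delta> <..< real j * \<delta>} \<inter> \<rat>))"
    have DI: "D \<subseteq> I j" using delta_pos by (auto simp: D_def I_def)
    have cD: "countable D" unfolding D_def by (intro countable_insert countable_Int2 countable_rat)
    have "(\<lambda>\<omega>. SUP s\<in>D. ennreal ((norm (Y j \<omega> - xs s \<omega>))\<^sup>2)) \<in> borel_measurable M"
    proof (rule borel_measurable_SUP[OF cD])
      fix s assume "s \<in> D"
      then have "s \<in> {0..h}" using DI I0h[OF j] by auto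
      then have "xs s \<in> borel_measurable M" using diff_meas by simp
      then show "(\<lambda>\<omega>. ennreal ((norm (Y j \<omega> - xs s \<omega>))\<^sup>2)) \<in> borel_measurable M"
        using Ym[OF j] by measurable
    qed
    moreover have "Gt j \<omega> = (SUP s\<in>D. ennreal ((norm (Y j \<omega> - xs s \<omega>))\<^sup>2))" if \<omega>: "\<omega> \<in> space M" for \<omega>
      unfolding Gt_def D_def I_def
    proof (rule sup_dense_eq)
      show "(real j - 1) * \<delta> < real j * \<delta>" using delta_pos by (simp add: algebra_simps)
      have "continuous_on {0..h} (\<lambda>s. xs s \<omega>)" using diff_cont[OF \<omega>] by simp
      then have "continuous_on (I j) (\<lambda>s. xs s \<omega>)" by (rule continuous_on_subset) (rule I0h[OF j])
      then show "continuous_on {(real j - 1) * \<delta>..real j * \<delta>} (\<lambda>s. (norm (Y j \<omega> - xs s \<omega>))\<^sup>2)"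
        unfolding I_def by (intro continuous_intros)
    qed
    ultimately show ?thesis by (subst measurable_cong) auto
  qed
  define q where "q = 2 * (real R)^4 * \<delta>^4"
  define cc where "cc = 4 * (real R)^3 * \<delta>^4"
  define a where "a = (\<lambda>\<omega> j. \<alpha> j \<omega>)"
  define Wv where "Wv = (\<lambda>\<omega> j. W1 (\<lambda>s. B s \<omega>) (\<alpha> j \<omega> * h))"
  define LHS where "LHS = (\<lambda>\<omega>. ennreal ((norm (alg2_iter grad u h R xn vn (a \<omega>) (Wv \<omega>) k i - xs (\<alpha> i \<omega> * h) \<omega>))\<^sup>2))"
  have pw: "LHS \<omega> \<le> ennreal (q ^ k) * ennreal (1 / real R) * (\<Sum>j=1..R. ft j \<omega>) + ennreal cc * (\<Sum>j=1..R. Gt j \<omega>)"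
    if \<omega>: "\<omega> \<in> space M" and aI: "\<forall>j\<in>{1..R}. \<alpha> j \<omega> \<in> Iu j" for \<omega>
  proof -
    define X where "X = (\<lambda>t. xs t \<omega>)"
    have aI': "a \<omega> j * h \<in> I j" if "j \<in> {1..R}" for j using ah aI that by (simp add: a_def)
    have cj: "c j \<omega> = \<alpha> j \<omega> * h" if "j \<in> {1..R}" for j
      using aI'[OF that] I0h[OF that] by (auto simp: c_def a_def)
    have Yj: "Y j \<omega> = X (a \<omega> j * h)" if "j \<in> {1..R}" for j using cj[OF that] by (simp add: Y_def X_def a_def)
    have cX: "continuous_on {0..h} X" using diff_cont[OF \<omega>] by (simp add: X_def)
    have form: "X t = xn + ((1 - exp (- 2 * t)) / 2) *\<^sub>R vn
          - (u / 2) *\<^sub>R integral {0..t} (\<lambda>s. (1 - exp (- 2 * (t - s))) *\<^sub>R grad (X s))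
          + sqrt u *\<^sub>R W1 (\<lambda>s. B s \<omega>) t" if t: "t \<in> {0..h}" for t
    proof -
      have cV: "continuous_on {0..h} (\<lambda>s. vs s \<omega>)" using diff_cont[OF \<omega>] by simp
      have cB: "continuous_on {0..h} (\<lambda>s. B s \<omega>)" using BMd(3) \<omega> by simp
      have B0: "B 0 \<omega> = 0" using BMd(3) \<omega> by simp
      have hX: "X t = xn + integral {0..t} (\<lambda>s. vs s \<omega>)" if "t \<in> {0..h}" for t
        using diff_x[OF \<omega> that] by (simp add: X_def)
      have hV: "vs t \<omega> = vn - integral {0..t} (\<lambda>s. 2 *\<^sub>R vs s \<omega> + u *\<^sub>R grad (X s)) + (2 * sqrt u) *\<^sub>R B t \<omega>"
        if "t \<in> {0..h}" for t
        using diff_v[OF \<omega> that] by (simp add: X_def)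
      show ?thesis by (rule diffusion_formula[OF gc cX cV cB B0 hX hV t])
    qed
    have "\<forall>j\<in>{1..R}. \<exists>s\<in>I j. \<forall>y\<in>I j. norm (X (a \<omega> j * h) - X y) \<le> norm (X (a \<omega> j * h) - X s)"
    proof
      fix j assume j: "j \<in> {1..R}"
      show "\<exists>s\<in>I j. \<forall>y\<in>I j. norm (X (a \<omega> j * h) - X y) \<le> norm (X (a \<omega> j * h) - X s)"
      proof (rule continuous_attains_sup)
        show "compact (I j)" by (simp add: I_def)
        show "I j \<noteq> {}" using delta_pos by (simp add: I_def algebra_simps)
        show "continuous_on (I j) (\<lambda>y. norm (X (a \<omega> j * h) - X y))"
          by (intro continuous_intros continuous_on_subset[OF cX I0h[OF j]])
      qed
    qed
    then obtain sf where sf: "\<And>j. j \<in> {1..R} \<Longrightarrow> sf j \<in> I j \<and> (\<forall>y\<in>I j. norm (X (a \<omega> j * h) - X y) \<le> norm (X (a \<omega> j * h) - X (sf j)))"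
      by metis
    define S where "S = (\<lambda>j. norm (X (a \<omega> j * h) - X (sf j)))"
    define e where "e = (\<lambda>k j. norm (alg2_iter grad u h R xn vn (a \<omega>) (Wv \<omega>) k j - X (a \<omega> j * h)))"
    have step: "e (Suc k) i \<le> h * \<delta> * (\<Sum>j=1..R. e k j + S j)" if i: "i \<in> {1..R}" for k i
      unfolding e_def
    proof (rule one_step_bound[OF Lpos u_def lip gc cX form R_ge delta_pos h_def _ _ _ i])
      show "a \<omega> j * h \<in> {(real j - 1) * \<delta>..real j * \<delta>}" if "j \<in> {1..R}" for j
        using aI'[OF that] by (simp add: I_def)
      show "Wv \<omega> j = W1 (\<lambda>s. B s \<omega>) (a \<omega> j * h)" for j by (simp add: Wv_def a_def)
      show "norm (X (a \<omega> j * h) - X s) \<le> S j" if "j \<in> {1..R}" "s \<in> {(real j - 1) * \<delta>..real j * \<delta>}" for j s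
        using sf[OF that(1)] that(2) by (simp add: S_def I_def)
    qed simp
    have rb: "(e k i)\<^sup>2 \<le> q ^ k * (1 / real R) * (\<Sum>j=1..R. (e 0 j)\<^sup>2) + cc * (\<Sum>j=1..R. (S j)\<^sup>2)"
      unfolding q_def cc_def
      by (rule recursion_bound[where e=e and S=S, OF R_ge delta_pos h_def small _ _ step i_range k_range(1)]) (auto simp: e_def S_def)
    have e0: "ennreal ((e 0 j)\<^sup>2) = ft j \<omega>" if "j \<in> {1..R}" for j
      using Yj[OF that] by (simp add: e_def ft_def)
    have SG: "ennreal ((S j)\<^sup>2) \<le> Gt j \<omega>" if j: "j \<in> {1..R}" for j
      unfolding Gt_def S_def using sf[OF j] Yj[OF j] by (auto simp: X_def intro!: SUP_upper2[of "sf j"])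
    have q0: "0 \<le> q" and cc0: "0 \<le> cc" by (simp_all add: q_def cc_def)
    have "LHS \<omega> = ennreal ((e k i)\<^sup>2)" by (simp add: LHS_def e_def X_def a_def)
    also have "\<dots> \<le> ennreal (q ^ k * (1 / real R) * (\<Sum>j=1..R. (e 0 j)\<^sup>2) + cc * (\<Sum>j=1..R. (S j)\<^sup>2))"
      using rb by (rule ennreal_leI)
    also have "\<dots> = ennreal (q ^ k) * ennreal (1 / real R) * (\<Sum>j=1..R. ennreal ((e 0 j)\<^sup>2)) + ennreal cc * (\<Sum>j=1..R. ennreal ((S j)\<^sup>2))"
    proof -
      define SA where "SA = (\<Sum>j=1..R. (e 0 j)\<^sup>2)"
      define SB where "SB = (\<Sum>j=1..R. (S j)\<^sup>2)"
      have nA: "0 \<le> SA" and nB: "0 \<le> SB" unfolding SA_def SB_def by (auto intro: sum_nonneg)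
      have xnn: "0 \<le> q ^ k" using q0 by simp
      have ynn: "0 \<le> 1 / real R" using Rpos by simp
      have "ennreal (q ^ k * (1 / real R) * SA + cc * SB) = ennreal (q ^ k * (1 / real R) * SA) + ennreal (cc * SB)"
        by (rule ennreal_plus) (use xnn ynn nA nB cc0 in \<open>auto intro!: mult_nonneg_nonneg\<close>)
      also have "ennreal (q ^ k * (1 / real R) * SA) = ennreal (q ^ k) * ennreal (1 / real R) * ennreal SA"
        by (simp only: ennreal_mult[OF mult_nonneg_nonneg[OF xnn ynn] nA] ennreal_mult[OF xnn ynn])
      also have "ennreal (cc * SB) = ennreal cc * ennreal SB" by (rule ennreal_mult[OF cc0 nB])
      also have "ennreal SA = (\<Sum>j=1..R. ennreal ((e 0 j)\<^sup>2))" unfolding SA_def by (rule sum_ennreal[symmetric]) simp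
      also have "ennreal SB = (\<Sum>j=1..R. ennreal ((S j)\<^sup>2))" unfolding SB_def by (rule sum_ennreal[symmetric]) simp
      finally show ?thesis by (simp only: SA_def SB_def)
    qed
    also have "\<dots> \<le> ennreal (q ^ k) * ennreal (1 / real R) * (\<Sum>j=1..R. ft j \<omega>) + ennreal cc * (\<Sum>j=1..R. Gt j \<omega>)"
      using e0 SG by (intro add_mono mult_left_mono sum_mono) auto
    finally show ?thesis .
  qed
  have "integral\<^sup>N M LHS \<le> (\<integral>\<^sup>+\<omega>. ennreal (q ^ k) * ennreal (1 / real R) * (\<Sum>j=1..R. ft j \<omega>) + ennreal cc * (\<Sum>j=1..R. Gt j \<omega>) \<partial>M)"
  proof (rule nn_integral_mono_AE)
    show "AE \<omega> in M. LHS \<omega> \<le> ennreal (q ^ k) * ennreal (1 / real R) * (\<Sum>j=1..R. ft j \<omega>) + ennreal cc * (\<Sum>j=1..R. Gt j \<omega>)"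
      using AEall by (rule AE_mp) (rule AE_I2, intro impI pw)
  qed
  also have "\<dots> = ennreal (q ^ k) * ennreal (1 / real R) * (\<Sum>j=1..R. integral\<^sup>N M (ft j)) + ennreal cc * (\<Sum>j=1..R. integral\<^sup>N M (Gt j))"
    using ftm Gtm nn_integral_sum[of "{1..R}" ft M, OF ftm] nn_integral_sum[of "{1..R}" Gt M, OF Gtm]
    by (simp add: nn_integral_add nn_integral_cmult borel_measurable_sum mult.assoc)
  also have "(\<Sum>j=1..R. integral\<^sup>N M (ft j)) = (\<Sum>j=1..R. \<integral>\<^sup>+\<omega>. ennreal ((norm (xn - xs (\<alpha> j \<omega> * h) \<omega>))\<^sup>2) \<partial>M)"
  proof (rule sum.cong[OF refl], rule nn_integral_cong_AE)
    fix j assume j: "j \<in> {1..R}"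
    show "AE \<omega> in M. ft j \<omega> = ennreal ((norm (xn - xs (\<alpha> j \<omega> * h) \<omega>))\<^sup>2)"
      using AEj[OF j] by eventually_elim (simp add: ft_def Y_def cjeq[OF j])
  qed
  also have "(\<Sum>j=1..R. integral\<^sup>N M (Gt j)) = (\<Sum>j=1..R. \<integral>\<^sup>+\<omega>. (SUP s\<in>{(real j - 1) * \<delta> .. real j * \<delta>}.
                  ennreal ((norm (xs (\<alpha> j \<omega> * h) \<omega> - xs s \<omega>))\<^sup>2)) \<partial>M)"
  proof (rule sum.cong[OF refl], rule nn_integral_cong_AE)
    fix j assume j: "j \<in> {1..R}"
    show "AE \<omega> in M. Gt j \<omega> = (SUP s\<in>{(real j - 1) * \<delta> .. real j * \<delta>}. ennreal ((norm (xs (\<alpha> j \<omega> * h) \<omega> - xs s \<omega>))\<^sup>2))"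
      using AEj[OF j] by eventually_elim (simp add: Gt_def Y_def cjeq[OF j] I_def)
  qed
  finally show ?thesis by (simp add: LHS_def a_def Wv_def q_def cc_def)
qed

end
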